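(* Let $d=1$, $S>0$, $c>0$, $\mu>0$, and consider the fields $\phi|_\pm$ and $\phi_m|_\pm$ described in the context. If for some $m\in\mathbb{N}$, some test function $f_m$ and some test function $f$ on $\mathbb{R}$ that does not vanish identically one has $\phi_m|_\pm(f_m)=\phi|_\pm(f)$, then $f$ cannot be supported in an interval of length smaller than $\frac{8}{\pi}S$.
   Context: $\mathbb{N}=\{0,1,\dots\}$. $q_0=0$; for $p\ge1$, $q_{2p}$ is the unique solution of $c^{-1}\tan(qS)=-q$ in $((p-\frac12)\frac\pi S,p\frac\pi S)$ and $q_{2p-1}$ the unique solution of $q\tan(qS)=c^{-1}$ in $((p-1)\frac\pi S,(p-\frac12)\frac\pi S)$. Let $\omega_m=\sqrt{q_m^2+\mu^2}$. Let $c_m>0$ be the normalization with $\int_{-S}^S|c_mS^{-1/2}\chi_m|^2dz+c\sum_{z=\pm S}|c_mS^{-1/2}\chi_m(z)|^2=1$, where $\chi_m=\cos(q_m z)$ ($m$ even), $\sin(q_mz)$ ($m$ odd); set $d_m=c_mS^{-1/2}\chi_m(S)$ (a non-zero real number). On the symmetric Fock space over $l^2(\mathbb{N})$ with $[a_m,a_{m'}^*]=\delta_{mm'}$, define the operator-valued distributions on $\mathbb{R}$ (time $t$) $\phi_m|_\pm(t)=(\pm)^m(2\omega_m)^{-1/2}(e^{-i\omega_mt}a_m+e^{i\omega_mt}a_m^* )$ and $\phi|_\pm(t)=\sum_m(\pm)^md_m(2\omega_m)^{-1/2}(e^{-i\omega_mt}a_m+e^{i\omega_mt}a_m^* )$;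 $\phi|_\pm$ is the restriction to the boundary component $z=\pm S$ of the quantized field of the $1+1$-dimensional strip with generalized Wentzell boundary conditions. Smearing: $\phi(f)=\int f(t)\phi(t)\,dt$. *)

theory Defs
  imports "HOL-Analysis.Analysis"
begin

definition smooth_fun :: "(real \<Rightarrow> complex) \<Rightarrow> bool" where
  "smooth_fun f \<longleftrightarrow> (\<exists>D :: nat \<Rightarrow> real \<Rightarrow> complex. D 0 = f \<and>
      (\<forall>k t. (D k has_vector_derivative D (Suc k) t) (at t)))"

definition test_fun :: "(real \<Rightarrow> complex) \<Rightarrow> bool" where
  "test_fun f \<longleftrightarrow> smooth_fun f \<and> bounded {t. f t \<noteq> 0}"

definition qm :: "real \<Rightarrow> real \<Rightarrow> nat \<Rightarrow> real" where
  "qm S c m =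
     (if m = 0 then 0
      else if even m then
        (THE q. (real (m div 2) - 1/2) * pi / S < q \<and> q < real (m div 2) * pi / S \<and>
                 tan (q * S) / c = - q)
      else
        (THE q. (real ((m + 1) div 2) - 1) * pi / S < q \<and> q < (real ((m + 1) div 2) - 1/2) * pi / S \<and>
                 q * tan (q * S) = 1 / c))"

definition omega :: "real \<Rightarrow> real \<Rightarrow> real \<Rightarrow> nat \<Rightarrow> real" where
  "omega S c \<mu> m = sqrt ((qm S c m)\<^sup>2 + \<mu>\<^sup>2)"

definition chi :: "real \<Rightarrow> real \<Rightarrow> nat \<Rightarrow> real \<Rightarrow> real" where
  "chi S c m z = (if even m then cos (qm S c m * z) else sin (qm S c m * z))"

definition cnorm :: "real \<Rightarrow> real \<Rightarrow> nat \<Rightarrow> real" where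
  "cnorm S c m = (THE x. x > 0 \<and>
      integral {-S..S} (\<lambda>z. \<bar>x * S powr (-1/2) * chi S c m z\<bar>\<^sup>2)
      + c * (\<bar>x * S powr (-1/2) * chi S c m S\<bar>\<^sup>2 + \<bar>x * S powr (-1/2) * chi S c m (-S)\<bar>\<^sup>2) = 1)"

definition dm :: "real \<Rightarrow> real \<Rightarrow> nat \<Rightarrow> real" where
  "dm S c m = cnorm S c m * S powr (-1/2) * chi S c m S"

text \<open>An operator of the form  sum_n (A n * a_n + B n * a_n^* )  on the symmetric Fock space
  over l^2(N) is represented by its coefficient pair (A, B).  Since the operators a_n, a_n^*
  are linearly independent (A is recovered from the action on one-particle states and B from
  the action on the vacuum), equality of such operators is equality of the coefficient pairs.\<close>
type_synonym fock_lin = "(nat \<Rightarrow> complex) \<times> (nat \<Rightarrow> complex)"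

definition smear :: "(real \<Rightarrow> complex) \<Rightarrow> real \<Rightarrow> complex" where
  "smear f w = integral UNIV (\<lambda>t. f t * exp (- \<i> * complex_of_real (w * t)))"

text \<open>sg = 1 for the boundary component z = S, sg = -1 for z = -S.\<close>
definition phi_m_bdry :: "real \<Rightarrow> real \<Rightarrow> real \<Rightarrow> real \<Rightarrow> nat \<Rightarrow> (real \<Rightarrow> complex) \<Rightarrow> fock_lin" where
  "phi_m_bdry S c \<mu> sg m f =
     ((\<lambda>n. if n = m then complex_of_real (sg ^ m * (2 * omega S c \<mu> m) powr (-1/2))
                           * smear f (omega S c \<mu> m) else 0),
      (\<lambda>n. if n = m then complex_of_real (sg ^ m * (2 * omega S c \<mu> m) powr (-1/2))
                           * smear f (- omega S c \<mu> m) else 0))"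

definition phi_bdry :: "real \<Rightarrow> real \<Rightarrow> real \<Rightarrow> real \<Rightarrow> (real \<Rightarrow> complex) \<Rightarrow> fock_lin" where
  "phi_bdry S c \<mu> sg f =
     ((\<lambda>n. complex_of_real (sg ^ n * dm S c n * (2 * omega S c \<mu> n) powr (-1/2))
              * smear f (omega S c \<mu> n)),
      (\<lambda>n. complex_of_real (sg ^ n * dm S c n * (2 * omega S c \<mu> n) powr (-1/2))
              * smear f (- omega S c \<mu> n)))"

end

theory Submission
  imports Defs "HOL-Complex_Analysis.Complex_Analysis"
begin


lemma qm_even_prop:
  assumes S: "S > 0" and c: "c > 0" and n: "n > 0" "even n"
  shows "(real n - 1) * pi / (2*S) < qm S c n \<and> qm S c n < real n * pi / (2*S) \<and>
         tan (qm S c n * S) / c = - qm S c n"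
proof -
  define p where "p = n div 2"
  have np: "real n = 2 * real p" using n(2) by (auto simp: p_def elim!: evenE)
  have p1: "p \<ge> 1" using n p_def by auto
  define P where "P = (\<lambda>q. (real (n div 2) - 1/2) * pi / S < q \<and> q < real (n div 2) * pi / S \<and>
                 tan (q * S) / c = - q)"
  have qdef: "qm S c n = (THE q. P q)" using n unfolding qm_def P_def by simp
  define lo where "lo = (real p - 1/2) * pi / S"
  define hi where "hi = real p * pi / S"
  have lohi: "lo < hi" using S by (simp add: lo_def hi_def field_simps)
  have lo0: "lo > 0" using S p1 by (simp add: lo_def field_simps)
  have loS: "lo * S = real p * pi - pi/2" using S by (simp add: lo_def field_simps)
  have hiS: "hi * S = real p * pi" using S by (simp add: hi_def field_simps)
  define \<psi> where "\<psi> = (\<lambda>q. (-1)^p * (sin (q*S) + c * q * cos (q*S)))"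
  have sinlo: "sin (lo*S) = - ((-1)^p)" unfolding loS by (simp add: sin_diff)
  have coslo: "cos (lo*S) = 0" unfolding loS by (simp add: cos_diff)
  have "\<psi> lo = -1" unfolding \<psi>_def sinlo coslo by (simp flip: power_mult_distrib)
  moreover have "\<psi> hi = c * hi" unfolding \<psi>_def hiS by (simp flip: power_mult_distrib)
  moreover have "c * hi > 0" using c S p1 by (simp add: hi_def)
  moreover have "continuous_on {lo..hi} \<psi>" unfolding \<psi>_def by (intro continuous_intros)
  ultimately obtain x where x: "lo \<le> x" "x \<le> hi" "\<psi> x = 0"
    using IVT'[of \<psi> lo 0 hi] lohi by force
  have xlo: "x \<noteq> lo" using x \<open>\<psi> lo = -1\<close> by auto
  have xhi: "x \<noteq> hi" using x \<open>\<psi> hi = c*hi\<close> \<open>c*hi>0\<close> by auto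
  have psi0: "sin (x*S) + c * x * cos (x*S) = 0" using x(3) unfolding \<psi>_def by simp
  have cosx: "cos (x*S) \<noteq> 0"
  proof
    assume "cos (x*S) = 0"
    then have "sin (x*S) = 0" using psi0 by simp
    with \<open>cos (x*S) = 0\<close> show False using sin_cos_squared_add[of "x*S"] by simp
  qed
  have "tan (x*S) = - c * x" using psi0 cosx by (simp add: tan_def field_simps)
  then have Px: "P x" unfolding P_def using x xlo xhi c
    by (simp add: p_def[symmetric] lo_def hi_def)
  have uniq: "y = x" if "P y" for y
  proof (rule ccontr)
    assume "y \<noteq> x"
    have mono: "tan (y1*S) < tan (y2*S)" if "P y1" "P y2" "y1 < y2" for y1 y2
    proof -
      have "tan (y1*S) = tan (y1*S - real p * pi)" using tan_periodic_nat[of "y1*S - real p * pi" p] by simp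
      moreover have "tan (y2*S) = tan (y2*S - real p * pi)" using tan_periodic_nat[of "y2*S - real p * pi" p] by simp
      moreover have "tan (y1*S - real p * pi) < tan (y2*S - real p * pi)"
      proof (rule tan_monotone)
        show "- (pi/2) < y1*S - real p * pi" using that(1) S unfolding P_def p_def[symmetric]
          by (simp add: field_simps)
        show "y1 * S - real p * pi < y2 * S - real p * pi" using that(3) S by simp
        show "y2 * S - real p * pi < pi / 2" using that(2) S unfolding P_def p_def[symmetric]
          by (simp add: field_simps)
      qed
      ultimately show ?thesis by simp
    qed
    have t: "tan (y1*S) = - c * y1" if "P y1" for y1 using that c unfolding P_def by (simp add: field_simps)
    show False
    proof (cases "y < x")
      case True
      from mono[OF that Px True] t[OF that] t[OF Px] have "c * x < c * y" by simp
      with c True show False by simp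
    next
      case False
      then have "x < y" using \<open>y \<noteq> x\<close> by simp
      from mono[OF Px that this] t[OF that] t[OF Px] have "c * y < c * x" by simp
      with c \<open>x < y\<close> show False by simp
    qed
  qed
  have "qm S c n = x" unfolding qdef using Px uniq by (rule the_equality)
  then show ?thesis using Px S unfolding P_def p_def[symmetric] by (simp add: np field_simps)
qed

lemma qm_odd_prop:
  assumes S: "S > 0" and c: "c > 0" and n: "odd n"
  shows "(real n - 1) * pi / (2*S) < qm S c n \<and> qm S c n < real n * pi / (2*S) \<and>
         qm S c n * tan (qm S c n * S) = 1 / c"
proof -
  define k where "k = n div 2"
  have nk: "n = 2 * k + 1" using n by (simp add: k_def)
  have pk: "real ((n + 1) div 2) - 1 = real k" "real ((n + 1) div 2) - 1/2 = real k + 1/2"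
    using nk by auto
  define P where "P = (\<lambda>q. (real ((n + 1) div 2) - 1) * pi / S < q \<and> q < (real ((n + 1) div 2) - 1/2) * pi / S \<and>
                 q * tan (q * S) = 1 / c)"
  have qdef: "qm S c n = (THE q. P q)" using n unfolding qm_def P_def by (cases "n = 0") auto
  have P': "P = (\<lambda>q. real k * pi / S < q \<and> q < (real k + 1/2) * pi / S \<and> q * tan (q * S) = 1 / c)"
    unfolding P_def pk ..
  define lo where "lo = real k * pi / S"
  define hi where "hi = (real k + 1/2) * pi / S"
  have lohi: "lo < hi" using S by (simp add: lo_def hi_def field_simps)
  have lo0: "lo \<ge> 0" using S by (simp add: lo_def)
  have loS: "lo * S = real k * pi" using S by (simp add: lo_def field_simps)
  have hiS: "hi * S = real k * pi + pi/2" using S by (simp add: hi_def field_simps)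
  define \<psi> where "\<psi> = (\<lambda>q. (-1)^k * (q * sin (q*S) - cos (q*S) / c))"
  have "\<psi> lo = - 1 / c" unfolding \<psi>_def loS by (simp flip: power_mult_distrib)
  moreover have "\<psi> hi = hi" unfolding \<psi>_def hiS by (simp add: sin_add cos_add flip: power_mult_distrib)
  moreover have "hi > 0" using lo0 lohi by simp
  moreover have "continuous_on {lo..hi} \<psi>" unfolding \<psi>_def using c by (intro continuous_intros) auto
  ultimately obtain x where x: "lo \<le> x" "x \<le> hi" "\<psi> x = 0"
    using IVT'[of \<psi> lo 0 hi] lohi c by force
  have xlo: "x \<noteq> lo" using x \<open>\<psi> lo = -1/c\<close> c by auto
  have xhi: "x \<noteq> hi" using x \<open>\<psi> hi = hi\<close> \<open>hi>0\<close> by auto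
  have x0: "x > 0" using x xlo lo0 by simp
  have psi0: "x * sin (x*S) - cos (x*S) / c = 0" using x(3) unfolding \<psi>_def by simp
  have cosx: "cos (x*S) \<noteq> 0"
  proof
    assume "cos (x*S) = 0"
    then have "sin (x*S) = 0" using psi0 x0 by simp
    with \<open>cos (x*S) = 0\<close> show False using sin_cos_squared_add[of "x*S"] by simp
  qed
  have "x * tan (x*S) = 1 / c" using psi0 cosx c by (simp add: tan_def field_simps)
  then have Px: "P x" unfolding P' using x xlo xhi c
    by (simp add: lo_def hi_def)
  have uniq: "y = x" if "P y" for y
  proof (rule ccontr)
    assume "y \<noteq> x"
    have mono: "tan (y1*S) < tan (y2*S)" if "P y1" "P y2" "y1 < y2" for y1 y2
    proof -
      have "tan (y1*S) = tan (y1*S - real k * pi)" using tan_periodic_nat[of "y1*S - real k * pi" k] by simp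
      moreover have "tan (y2*S) = tan (y2*S - real k * pi)" using tan_periodic_nat[of "y2*S - real k * pi" k] by simp
      moreover have "tan (y1*S - real k * pi) < tan (y2*S - real k * pi)"
      proof (rule tan_monotone)
        have "real k * pi / S < y1" using that(1) unfolding P' by simp
        then have "real k * pi < y1 * S" using S by (simp add: field_simps)
        then show "- (pi/2) < y1*S - real k * pi" using pi_gt_zero by linarith
        show "y1 * S - real k * pi < y2 * S - real k * pi" using that(3) S by simp
        have "y2 < (real k + 1/2) * pi / S" using that(2) unfolding P' by simp
        then have "y2 * S < (real k + 1/2) * pi" using S by (simp add: field_simps)
        then show "y2 * S - real k * pi < pi / 2" by (simp add: algebra_simps)
      qed
      ultimately show ?thesis by simp
    qed
    have pos: "y1 > 0" if "P y1" for y1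
    proof -
      have "real k * pi / S < y1" using that unfolding P' by simp
      moreover have "real k * pi / S \<ge> 0" using S by simp
      ultimately show ?thesis by linarith
    qed
    have t: "tan (y1*S) = 1 / (c * y1)" if "P y1" for y1 using that c pos[OF that] unfolding P' by (simp add: field_simps)
    have anti: "1 / (c * y2) < 1 / (c * y1)" if "P y1" "P y2" "y1 < y2" for y1 y2
      using pos[OF that(1)] that(3) c by (simp add: field_simps)
    show False
    proof (cases "y < x")
      case True
      from mono[OF that Px True] t[OF that] t[OF Px] anti[OF that Px True] show False by simp
    next
      case False
      then have "x < y" using \<open>y \<noteq> x\<close> by simp
      from mono[OF Px that this] t[OF that] t[OF Px] anti[OF Px that this] show False by simp
    qed
  qed
  have "qm S c n = x" unfolding qdef using Px uniq by (rule the_equality)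
  then show ?thesis using Px S unfolding P' by (simp add: nk field_simps)
qed

lemma qm_prop:
  assumes S: "S > 0" and c: "c > 0" and n: "n > 0"
  shows "(real n - 1) * pi / (2*S) < qm S c n \<and> qm S c n < real n * pi / (2*S) \<and> chi S c n S \<noteq> 0"
proof (cases "even n")
  case True
  note q = qm_even_prop[OF S c n True]
  have "real n \<ge> 2" using n True by (auto elim!: evenE)
  then have "(real n - 1) * pi / (2*S) > 0" using S by simp
  then have "qm S c n > 0" using q by linarith
  moreover have "cos (qm S c n * S) \<noteq> 0"
  proof
    assume "cos (qm S c n * S) = 0"
    then have "tan (qm S c n * S) = 0" by (simp add: tan_def)
    with q \<open>qm S c n > 0\<close> show False by simp
  qed
  ultimately show ?thesis using q True by (simp add: chi_def)
next
  case False
  note q = qm_odd_prop[OF S c False]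
  have "sin (qm S c n * S) \<noteq> 0"
  proof
    assume "sin (qm S c n * S) = 0"
    then have "tan (qm S c n * S) = 0" by (simp add: tan_def)
    with q c show False by simp
  qed
  then show ?thesis using q False by (simp add: chi_def)
qed

lemma qm_0: "qm S c 0 = 0" by (simp add: qm_def)

lemma chi_S_nonzero:
  assumes S: "S > 0" and c: "c > 0"
  shows "chi S c n S \<noteq> 0"
  using qm_prop[OF S c, of n] by (cases "n = 0") (auto simp: chi_def qm_0)

lemma cnorm_pos:
  assumes S: "S > 0" and c: "c > 0"
  shows "cnorm S c n > 0"
proof -
  define ch where "ch = chi S c n"
  define s where "s = S powr (-1/2)"
  have cont: "continuous_on {-S..S} (\<lambda>z. (ch z)\<^sup>2)"
    unfolding ch_def chi_def by (cases "even n") (auto intro!: continuous_intros)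
  define I where "I = integral {-S..S} (\<lambda>z. (ch z)\<^sup>2)"
  have I0: "I \<ge> 0" unfolding I_def
    by (rule integral_nonneg[OF integrable_continuous_interval[OF cont]]) auto
  define K where "K = s\<^sup>2 * (I + c * ((ch S)\<^sup>2 + (ch (-S))\<^sup>2))"
  have "s > 0" using S by (simp add: s_def)
  moreover have "(ch S)\<^sup>2 > 0" using chi_S_nonzero[OF S c, of n] by (simp add: ch_def)
  moreover have "(ch (-S))\<^sup>2 \<ge> 0" by simp
  ultimately have "c * ((ch S)\<^sup>2 + (ch (-S))\<^sup>2) > 0" using c by (simp add: add_pos_nonneg)
  then have "I + c * ((ch S)\<^sup>2 + (ch (-S))\<^sup>2) > 0" using I0 by linarith
  then have K0: "K > 0" unfolding K_def using \<open>s > 0\<close> by simp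
  have eq: "integral {-S..S} (\<lambda>z. \<bar>x * s * ch z\<bar>\<^sup>2) + c * (\<bar>x * s * ch S\<bar>\<^sup>2 + \<bar>x * s * ch (-S)\<bar>\<^sup>2)
            = x\<^sup>2 * K" for x
  proof -
    have "integral {-S..S} (\<lambda>z. \<bar>x * s * ch z\<bar>\<^sup>2) = integral {-S..S} (\<lambda>z. (x\<^sup>2 * s\<^sup>2) * (ch z)\<^sup>2)"
      by (simp add: power_mult_distrib)
    also have "\<dots> = (x\<^sup>2 * s\<^sup>2) * I" unfolding I_def
      by (rule integral_mult[symmetric, OF integrable_continuous_interval[OF cont]])
    finally show ?thesis by (simp add: K_def power_mult_distrib algebra_simps)
  qed
  have ex: "\<exists>!x. x > 0 \<and> integral {-S..S} (\<lambda>z. \<bar>x * s * ch z\<bar>\<^sup>2) + c * (\<bar>x * s * ch S\<bar>\<^sup>2 + \<bar>x * s * ch (-S)\<bar>\<^sup>2) = 1"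
  proof (rule ex1I[of _ "1 / sqrt K"])
    show "1 / sqrt K > 0 \<and> integral {-S..S} (\<lambda>z. \<bar>1 / sqrt K * s * ch z\<bar>\<^sup>2) + c * (\<bar>1 / sqrt K * s * ch S\<bar>\<^sup>2 + \<bar>1 / sqrt K * s * ch (-S)\<bar>\<^sup>2) = 1"
      unfolding eq using K0 by (simp add: power_divide)
    fix y assume "y > 0 \<and> integral {-S..S} (\<lambda>z. \<bar>y * s * ch z\<bar>\<^sup>2) + c * (\<bar>y * s * ch S\<bar>\<^sup>2 + \<bar>y * s * ch (-S)\<bar>\<^sup>2) = 1"
    then have y: "y > 0" "y\<^sup>2 * K = 1" unfolding eq by auto
    then have "y\<^sup>2 = (1 / sqrt K)\<^sup>2" using K0 by (simp add: power_divide field_simps)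
    then show "y = 1 / sqrt K" using y(1) K0 by (simp add: power2_eq_iff_nonneg)
  qed
  have "cnorm S c n = (THE x. x > 0 \<and> integral {-S..S} (\<lambda>z. \<bar>x * s * ch z\<bar>\<^sup>2) + c * (\<bar>x * s * ch S\<bar>\<^sup>2 + \<bar>x * s * ch (-S)\<bar>\<^sup>2) = 1)"
    unfolding cnorm_def s_def ch_def ..
  with theI'[OF ex] show ?thesis by simp
qed

lemma dm_nonzero:
  assumes S: "S > 0" and c: "c > 0"
  shows "dm S c n \<noteq> 0"
  using cnorm_pos[OF S c, of n] chi_S_nonzero[OF S c, of n] S by (simp add: dm_def)

lemma qm_bounds:
  assumes S: "S > 0" and c: "c > 0"
  shows "0 \<le> qm S c n" "qm S c n \<le> real n * (pi / (2*S))"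
proof -
  show "0 \<le> qm S c n"
  proof (cases "n = 0")
    case False
    then have "(real n - 1) * pi / (2*S) \<ge> 0" using S by simp
    then show ?thesis using qm_prop[OF S c, of n] False by linarith
  qed (simp add: qm_0)
  show "qm S c n \<le> real n * (pi / (2*S))"
    using qm_prop[OF S c, of n] by (cases "n = 0") (auto simp: qm_0)
qed

lemma qm_strict_mono:
  assumes S: "S > 0" and c: "c > 0" and lt: "n < n'"
  shows "qm S c n < qm S c n'"
proof -
  have n'0: "n' > 0" using lt by simp
  have "qm S c n \<le> real n * (pi / (2*S))" by (rule qm_bounds[OF S c])
  also have "\<dots> \<le> (real n' - 1) * pi / (2*S)" using lt S
    by (simp add: divide_right_mono mult_right_mono)
  also have "\<dots> < qm S c n'" using qm_prop[OF S c n'0] by simp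
  finally show ?thesis .
qed

lemma omega_pos:
  assumes mu: "\<mu> > 0" shows "omega S c \<mu> n > 0"
  using mu by (simp add: omega_def add_nonneg_pos)

lemma omega_le:
  assumes S: "S > 0" and c: "c > 0" and mu: "\<mu> > 0"
  shows "omega S c \<mu> n \<le> real n * (pi / (2*S)) + \<mu>"
proof -
  have q0: "0 \<le> qm S c n" by (rule qm_bounds[OF S c])
  have "omega S c \<mu> n \<le> sqrt ((qm S c n + \<mu>)\<^sup>2)" unfolding omega_def
    using q0 mu by (intro real_sqrt_le_mono) (simp add: power2_eq_square algebra_simps)
  also have "\<dots> = qm S c n + \<mu>" using q0 mu by simp
  finally show ?thesis using qm_bounds(2)[OF S c, of n] by linarith
qed

lemma omega_inj:
  assumes S: "S > 0" and c: "c > 0" and mu: "\<mu> > 0"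
  shows "inj (omega S c \<mu>)"
proof (rule injI)
  fix n n' assume eq: "omega S c \<mu> n = omega S c \<mu> n'"
  have mono: "omega S c \<mu> n < omega S c \<mu> n'" if "n < n'" for n n'
  proof -
    have "qm S c n < qm S c n'" by (rule qm_strict_mono[OF S c that])
    moreover have "0 \<le> qm S c n" by (rule qm_bounds[OF S c])
    ultimately have "(qm S c n)\<^sup>2 < (qm S c n')\<^sup>2" by (simp add: power_strict_mono)
    then show ?thesis unfolding omega_def by simp
  qed
  show "n = n'"
  proof (rule ccontr)
    assume "n \<noteq> n'"
    then have "n < n' \<or> n' < n" by auto
    then show False using mono eq by fastforce
  qed
qed

lemma smear_zeros:
  assumes S: "S > 0" and c: "c > 0" and mu: "\<mu> > 0" and sg: "sg = 1 \<or> sg = -1"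
    and eq: "phi_m_bdry S c \<mu> sg m fm = phi_bdry S c \<mu> sg f"
    and n: "n \<noteq> m"
  shows "smear f (omega S c \<mu> n) = 0" "smear f (- omega S c \<mu> n) = 0"
proof -
  define k where "k = complex_of_real (sg ^ n * dm S c n * (2 * omega S c \<mu> n) powr (-1/2))"
  have "sg ^ n \<noteq> 0" using sg by auto
  moreover have "dm S c n \<noteq> 0" by (rule dm_nonzero[OF S c])
  moreover have "(2 * omega S c \<mu> n) powr (-1/2) \<noteq> 0" using omega_pos[OF mu, of S c n] by simp
  ultimately have k0: "k \<noteq> 0" unfolding k_def by simp
  from eq have e1: "fst (phi_m_bdry S c \<mu> sg m fm) n = fst (phi_bdry S c \<mu> sg f) n"
    and e2: "snd (phi_m_bdry S c \<mu> sg m fm) n = snd (phi_bdry S c \<mu> sg f) n" by auto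
  from e1 have "k * smear f (omega S c \<mu> n) = 0" using n
    unfolding phi_m_bdry_def phi_bdry_def k_def by simp
  then show "smear f (omega S c \<mu> n) = 0" using k0 by simp
  from e2 have "k * smear f (- omega S c \<mu> n) = 0" using n
    unfolding phi_m_bdry_def phi_bdry_def k_def by simp
  then show "smear f (- omega S c \<mu> n) = 0" using k0 by simp
qed



lemma jensen_base:
  fixes H :: "complex \<Rightarrow> complex"
  assumes hol: "H holomorphic_on UNIV" and rho: "\<rho> > 0"
    and bd: "\<And>w. norm w = \<rho> \<Longrightarrow> norm (H w) \<le> M"
  shows "norm (H 0) \<le> M"
proof (rule maximum_modulus_frontier[of H "cball 0 \<rho>"])
  show "H holomorphic_on interior (cball 0 \<rho>)" using hol by (rule holomorphic_on_subset) auto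
  show "continuous_on (closure (cball 0 \<rho>)) H"
    using holomorphic_on_imp_continuous_on[OF hol] by (rule continuous_on_subset) auto
  show "bounded (cball (0::complex) \<rho>)" by simp
  show "norm (H z) \<le> M" if "z \<in> frontier (cball 0 \<rho>)" for z
    using that rho bd by (simp add: frontier_cball)
  show "0 \<in> cball (0::complex) \<rho>" using rho by simp
qed

lemma jensen_ineq:
  fixes H :: "complex \<Rightarrow> complex"
  assumes fin: "finite A"
  shows "H holomorphic_on UNIV \<Longrightarrow> \<rho> > 0 \<Longrightarrow> (\<And>w. norm w = \<rho> \<Longrightarrow> norm (H w) \<le> M)
    \<Longrightarrow> H 0 \<noteq> 0 \<Longrightarrow> (\<And>a. a \<in> A \<Longrightarrow> H a = 0 \<and> norm a < \<rho>)
    \<Longrightarrow> norm (H 0) * (\<Prod>a\<in>A. \<rho> / norm a) \<le> M"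
  using fin
proof (induction A arbitrary: H rule: finite_induct)
  case empty
  then show ?case using jensen_base[of H \<rho> M] by simp
next
  case (insert a A)
  have Ha: "H a = 0" and na: "norm a < \<rho>" using insert.prems(5) by auto
  have a0: "a \<noteq> 0" using Ha insert.prems(4) by auto
  define Q where "Q = (\<lambda>z. if z = a then deriv H a else (H z - H a) / (z - a))"
  have holQ: "Q holomorphic_on UNIV" unfolding Q_def
    by (rule pole_lemma_open[OF insert.prems(1)]) simp
  define H1 where "H1 = (\<lambda>z. Q z * ((complex_of_real (\<rho>\<^sup>2) - cnj a * z) / complex_of_real \<rho>))"
  have hol1: "H1 holomorphic_on UNIV" unfolding H1_def
    using insert.prems(2) by (intro holomorphic_intros holQ) auto
  have Qz: "Q z = H z / (z - a)" if "z \<noteq> a" for z using that Ha by (simp add: Q_def)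
  have Q0: "Q 0 = - H 0 / a" using Qz[of 0] a0 by simp
  have H10: "H1 0 = - H 0 * \<rho> / a"
    using a0 insert.prems(2) by (simp add: H1_def Q0 power2_eq_square field_simps)
  have H1bd: "norm (H1 w) \<le> M" if w: "norm w = \<rho>" for w
  proof -
    have wa: "w \<noteq> a" using w na by auto
    have "complex_of_real (\<rho>\<^sup>2) = w * cnj w" using w complex_norm_square[of w] by simp
    then have "complex_of_real (\<rho>\<^sup>2) - cnj a * w = w * cnj (w - a)" by (simp add: algebra_simps)
    then have "norm (complex_of_real (\<rho>\<^sup>2) - cnj a * w) = \<rho> * norm (w - a)"
      using w by (simp add: norm_mult flip: complex_cnj_diff)
    then have "norm (H1 w) = norm (H w)"
      unfolding H1_def Qz[OF wa] using wa insert.prems(2)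
      by (simp add: norm_mult norm_divide)
    then show ?thesis using insert.prems(3)[OF w] by simp
  qed
  have H1z: "H1 0 \<noteq> 0" using H10 insert.prems(2,4) a0 by simp
  have H1A: "H1 b = 0 \<and> norm b < \<rho>" if "b \<in> A" for b
  proof -
    have "b \<noteq> a" using that insert.hyps by auto
    moreover have "H b = 0" "norm b < \<rho>" using insert.prems(5) that by auto
    ultimately show ?thesis by (simp add: H1_def Qz)
  qed
  have IH: "norm (H1 0) * (\<Prod>a\<in>A. \<rho> / norm a) \<le> M"
    by (rule insert.IH[OF hol1 insert.prems(2) H1bd H1z H1A])
  have "norm (H1 0) = norm (H 0) * (\<rho> / norm a)"
    using H10 insert.prems(2) by (simp add: norm_mult norm_divide)
  then show ?case using IH insert.hyps by (simp add: mult_ac)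
qed



definition Mk :: "(real \<Rightarrow> complex) \<Rightarrow> real \<Rightarrow> real \<Rightarrow> nat \<Rightarrow> complex \<Rightarrow> complex" where
  "Mk f a b k z = integral {a..b} (\<lambda>t. f t * (- \<i> * of_real t)^k * exp (- \<i> * z * of_real t))"

lemma Mk_deriv:
  assumes fc: "continuous_on UNIV f"
  shows "(Mk f a b k has_field_derivative Mk f a b (Suc k) z) (at z)"
proof -
  have cf: "continuous_on (UNIV \<times> cbox a b) (\<lambda>p. f (snd p))"
    by (rule continuous_on_compose2[OF fc continuous_on_snd]) auto
  have "((\<lambda>z. integral (cbox a b) (\<lambda>t. f t * (- \<i> * of_real t)^k * exp (- \<i> * z * of_real t)))
      has_field_derivative integral (cbox a b) (\<lambda>t. f t * (- \<i> * of_real t)^(Suc k) * exp (- \<i> * z * of_real t)))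
      (at z within UNIV)"
  proof (rule leibniz_rule_field_derivative[where U=UNIV])
    fix x :: complex and t :: real
    show "((\<lambda>x. f t * (- \<i> * of_real t)^k * exp (- \<i> * x * of_real t)) has_field_derivative
           f t * (- \<i> * of_real t)^(Suc k) * exp (- \<i> * x * of_real t)) (at x within UNIV)"
      by (auto intro!: derivative_eq_intros simp: algebra_simps)
  next
    fix x :: complex
    have "continuous_on (cbox a b) (\<lambda>t. f t * (- \<i> * of_real t)^k * exp (- \<i> * x * of_real t))"
      using fc by (auto intro!: continuous_intros intro: continuous_on_subset)
    then show "(\<lambda>t. f t * (- \<i> * of_real t)^k * exp (- \<i> * x * of_real t)) integrable_on cbox a b"
      by (rule integrable_continuous)
  next
    show "continuous_on (UNIV \<times> cbox a b) (\<lambda>(x, t). f t * (- \<i> * of_real t)^(Suc k) * exp (- \<i> * x * of_real t))"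
      unfolding split_beta using cf by (intro continuous_intros) auto
  qed auto
  then show ?thesis unfolding Mk_def by simp
qed

lemma Mk_all_zero:
  assumes fc: "continuous_on UNIV f" and z: "\<And>z. Mk f a b 0 z = 0"
  shows "Mk f a b k z = 0"
proof (induction k arbitrary: z)
  case 0 then show ?case by (rule z)
next
  case (Suc k)
  have d1: "(Mk f a b k has_field_derivative Mk f a b (Suc k) z) (at z)" by (rule Mk_deriv[OF fc])
  have "Mk f a b k = (\<lambda>_. 0)" using Suc by auto
  then have d2: "(Mk f a b k has_field_derivative 0) (at z)" by simp
  show ?case using DERIV_unique[OF d1 d2] .
qed

lemma cont_integrable:
  fixes g :: "real \<Rightarrow> 'a::banach"
  shows "continuous_on UNIV g \<Longrightarrow> g integrable_on {a..b}"
  by (rule integrable_continuous_interval) (auto intro: continuous_on_subset)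

lemma Mk_nonzero:
  assumes fc: "continuous_on UNIV f" and ab: "a < b" and t1: "t1 \<in> {a..b}" "f t1 \<noteq> 0"
  shows "\<exists>z. Mk f a b 0 z \<noteq> 0"
proof (rule ccontr)
  assume "\<not> (\<exists>z. Mk f a b 0 z \<noteq> 0)"
  then have z: "\<And>z. Mk f a b 0 z = 0" by auto
  have int1: "(\<lambda>t. f t * g t) integrable_on {a..b}" if "continuous_on UNIV g" for g :: "real \<Rightarrow> complex"
    using fc that by (intro cont_integrable continuous_intros)
  have mom: "integral {a..b} (\<lambda>t. f t * of_real (t^k)) = 0" for k
  proof -
    have ik: "(\<lambda>t. f t * of_real (t^k)) integrable_on {a..b}"
      by (rule int1) (intro continuous_intros)
    have "((\<lambda>t. f t * of_real (t^k)) has_integral integral {a..b} (\<lambda>t. f t * of_real (t^k))) {a..b}"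
      using integrable_integral[OF ik] .
    then have "((\<lambda>t. f t * of_real (t^k) * (- \<i>)^k) has_integral integral {a..b} (\<lambda>t. f t * of_real (t^k)) * (- \<i>)^k) {a..b}"
      by (rule has_integral_mult_left)
    moreover have "(\<lambda>t. f t * of_real (t^k) * (- \<i>)^k) = (\<lambda>t. f t * (- \<i> * of_real t)^k * exp (- \<i> * 0 * of_real t))"
    proof
      fix t
      have "(- \<i> * complex_of_real t)^k = (- \<i>)^k * of_real (t^k)"
        by (simp only: power_mult_distrib of_real_power)
      then show "f t * of_real (t^k) * (- \<i>)^k = f t * (- \<i> * of_real t)^k * exp (- \<i> * 0 * of_real t)"
        by (simp only: mult_zero_right mult_zero_left exp_zero mult_1_right mult_1_left mult_ac)
    qed
    ultimately have "Mk f a b k 0 = integral {a..b} (\<lambda>t. f t * of_real (t^k)) * (- \<i>)^k"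
      unfolding Mk_def by (simp add: integral_unique)
    then show ?thesis using Mk_all_zero[OF fc z, of k 0] by simp
  qed
  have poly0: "integral {a..b} (\<lambda>t. f t * of_real (p t)) = 0" if rp: "real_polynomial_function p" for p
  proof -
    obtain c n where p: "p = (\<lambda>x. \<Sum>i\<le>n. c i * x^i)" using rp unfolding real_polynomial_function_iff_sum by blast
    have "(\<lambda>t. f t * of_real (p t)) = (\<lambda>t. \<Sum>i\<le>n. of_real (c i) * (f t * of_real (t^i)))"
      by (auto simp: p sum_distrib_left mult_ac)
    moreover have "integral {a..b} (\<lambda>t. \<Sum>i\<le>n. of_real (c i) * (f t * of_real (t^i))) =
        (\<Sum>i\<le>n. integral {a..b} (\<lambda>t. of_real (c i) * (f t * of_real (t^i))))"
      by (rule integral_sum) (auto intro!: integrable_on_cmult_left int1 continuous_intros)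
    moreover have "integral {a..b} (\<lambda>t. of_real (c i) * (f t * of_real (t^i))) = 0" for i
    proof -
      have "integral {a..b} (\<lambda>t. of_real (c i) * (f t * of_real (t^i))) = integral {a..b} (\<lambda>t. c i *\<^sub>R (f t * of_real (t^i)))"
        by (simp add: scaleR_conv_of_real)
      also have "\<dots> = 0" using mom[of i] by simp
      finally show ?thesis .
    qed
    ultimately show ?thesis by (auto intro!: sum.neutral)
  qed
  define Y where "Y = integral {a..b} (\<lambda>t. norm (f t))"
  define X where "X = integral {a..b} (\<lambda>t. (norm (f t))\<^sup>2)"
  have contn: "continuous_on UNIV (\<lambda>t. norm (f t))" using fc by (intro continuous_intros)
  have contX: "continuous_on {a..b} (\<lambda>t. (norm (f t))\<^sup>2)" using fc by (auto intro!: continuous_intros intro: continuous_on_subset)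
  have Y0: "Y \<ge> 0" unfolding Y_def by (rule integral_nonneg[OF cont_integrable[OF contn]]) auto
  have X0: "X \<ge> 0" unfolding X_def by (rule integral_nonneg[OF integrable_continuous_interval[OF contX]]) auto
  have Xle: "X \<le> 2 * e * Y" if e: "e > 0" for e
  proof -
    have cu: "continuous_on {a..b} (\<lambda>t. Re (f t))" "continuous_on {a..b} (\<lambda>t. Im (f t))"
      using fc by (auto intro!: continuous_intros intro: continuous_on_subset)
    obtain pu where pu: "real_polynomial_function pu" "\<And>x. x \<in> {a..b} \<Longrightarrow> \<bar>Re (f x) - pu x\<bar> < e"
      using Stone_Weierstrass_real_polynomial_function[OF compact_Icc cu(1) e] by blast
    obtain pv where pv: "real_polynomial_function pv" "\<And>x. x \<in> {a..b} \<Longrightarrow> \<bar>Im (f x) - pv x\<bar> < e"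
      using Stone_Weierstrass_real_polynomial_function[OF compact_Icc cu(2) e] by blast
    have cpu: "continuous_on UNIV pu" "continuous_on UNIV pv"
      using pu(1) pv(1) continuous_on_polymonial_function real_polynomial_function_eq by blast+
    define P where "P = (\<lambda>t. of_real (pu t) - \<i> * of_real (pv t))"
    have cP: "continuous_on UNIV P" unfolding P_def using cpu by (intro continuous_intros)
    have iP: "integral {a..b} (\<lambda>t. f t * P t) = 0"
    proof -
      have "integral {a..b} (\<lambda>t. f t * P t) = integral {a..b} (\<lambda>t. f t * of_real (pu t)) - integral {a..b} (\<lambda>t. \<i> * (f t * of_real (pv t)))"
        unfolding P_def
        by (subst integral_diff[symmetric]) (auto simp: algebra_simps intro!: int1 continuous_intros cpu integrable_on_mult_right)
      also have "integral {a..b} (\<lambda>t. \<i> * (f t * of_real (pv t))) = \<i> * integral {a..b} (\<lambda>t. f t * of_real (pv t))"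
        using has_integral_mult_right[OF integrable_integral[OF int1[of "\<lambda>t. of_real (pv t)"]], of \<i>] cpu
        by (auto intro!: integral_unique continuous_intros)
      finally show ?thesis using poly0[OF pu(1)] poly0[OF pv(1)] by simp
    qed
    have ff: "f t * cnj (f t) = of_real ((norm (f t))\<^sup>2)" for t using complex_norm_square[of "f t"] by simp
    have "of_real X = integral {a..b} (\<lambda>t. of_real ((norm (f t))\<^sup>2) :: complex)"
    proof -
      have "integral {a..b} ((of_real :: real \<Rightarrow> complex) \<circ> (\<lambda>t. (norm (f t))\<^sup>2)) = of_real X"
        unfolding X_def by (rule integral_linear[OF integrable_continuous_interval[OF contX] bounded_linear_of_real])
      then show ?thesis by (simp add: o_def del: of_real_power)
    qed
    also have "\<dots> = integral {a..b} (\<lambda>t. f t * (cnj (f t) - P t)) + integral {a..b} (\<lambda>t. f t * P t)"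
    proof -
      have e1: "(of_real ((norm (f t))\<^sup>2) :: complex) = f t * (cnj (f t) - P t) + f t * P t" for t
        by (simp only: ff[symmetric]) (simp add: algebra_simps)
      have cc: "continuous_on UNIV (\<lambda>t. cnj (f t) - P t)" using fc cP by (intro continuous_intros)
      have "integral {a..b} (\<lambda>t. of_real ((norm (f t))\<^sup>2) :: complex)
           = integral {a..b} (\<lambda>t. f t * (cnj (f t) - P t) + f t * P t)"
        by (simp only: e1)
      also have "\<dots> = integral {a..b} (\<lambda>t. f t * (cnj (f t) - P t)) + integral {a..b} (\<lambda>t. f t * P t)"
        by (rule integral_add[OF int1[OF cc] int1[OF cP]])
      finally show ?thesis .
    qed
    also have "\<dots> = integral {a..b} (\<lambda>t. f t * (cnj (f t) - P t))" using iP by simp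
    finally have "X = norm (integral {a..b} (\<lambda>t. f t * (cnj (f t) - P t)))" using X0 by (metis norm_of_real abs_of_nonneg)
    also have "\<dots> \<le> integral {a..b} (\<lambda>t. norm (f t) * (2 * e))"
    proof (rule integral_norm_bound_integral)
      show "(\<lambda>t. f t * (cnj (f t) - P t)) integrable_on {a..b}"
        by (rule int1) (use fc cP in \<open>intro continuous_intros\<close>)
      show "(\<lambda>t. norm (f t) * (2 * e)) integrable_on {a..b}" by (auto intro!: cont_integrable continuous_intros contn)
      fix t assume t: "t \<in> {a..b}"
      have "cnj (f t) - P t = of_real (Re (f t) - pu t) - \<i> * of_real (Im (f t) - pv t)"
        unfolding P_def by (simp add: complex_eq_iff)
      then have "norm (cnj (f t) - P t) \<le> \<bar>Re (f t) - pu t\<bar> + \<bar>Im (f t) - pv t\<bar>"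
        by (metis (no_types, lifting) norm_triangle_ineq4 norm_ii norm_mult mult_1 norm_of_real)
      also have "\<dots> \<le> 2 * e" using pu(2)[OF t] pv(2)[OF t] by simp
      finally show "norm (f t * (cnj (f t) - P t)) \<le> norm (f t) * (2 * e)"
        by (simp add: norm_mult mult_left_mono)
    qed
    also have "\<dots> = 2 * e * Y" unfolding Y_def
      using integral_mult[OF cont_integrable[OF contn], of "2*e"] by (simp add: mult_ac)
    finally show ?thesis .
  qed
  have "X = 0"
  proof (rule ccontr)
    assume "X \<noteq> 0"
    then have Xp: "X > 0" using X0 by simp
    define e where "e = X / (2 * (2 * Y + 1))"
    have e: "e > 0" using Xp Y0 by (simp add: e_def)
    have "2 * e * Y = X * Y / (2 * Y + 1)" using Y0 by (simp add: e_def field_simps)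
    also have "\<dots> < X" using Xp Y0 by (simp add: field_simps add_pos_nonneg)
    finally show False using Xle[OF e] by simp
  qed
  then have "\<forall>t\<in>{a..b}. (norm (f t))\<^sup>2 = 0"
    using integral_eq_0_iff[OF contX ab] unfolding X_def by simp
  then show False using t1 by simp
qed



lemma stir:
  fixes B :: real assumes B: "B > 0"
  shows "(\<Sum>n<N. ln (real n + B)) \<le> (real N + B) * ln (real N + B) - real N - B * ln B"
proof (induction N)
  case 0 then show ?case by simp
next
  case (Suc N)
  define x where "x = real N + B"
  have x: "x > 0" using B by (simp add: x_def)
  have key: "1 / (x + 1) \<le> ln ((x + 1) / x)"
  proof -
    have "ln (x / (x + 1)) \<le> x / (x + 1) - 1" using x by (intro ln_le_minus_one) simp
    moreover have "ln (x / (x + 1)) = - ln ((x + 1) / x)" using x by (simp add: ln_div)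
    moreover have "x / (x + 1) - 1 = - (1 / (x + 1))" using x by (simp add: field_simps)
    ultimately show ?thesis by linarith
  qed
  have eq: "ln ((x + 1) / x) = ln (x + 1) - ln x" using x by (simp add: ln_div)
  have k1: "1 \<le> (x + 1) * ln ((x + 1) / x)" using key x by (simp add: divide_le_eq mult.commute)
  then have k2: "1 \<le> (x + 1) * (ln (x + 1) - ln x)" unfolding eq .
  have "(\<Sum>n<Suc N. ln (real n + B)) = (\<Sum>n<N. ln (real n + B)) + ln x" by (simp add: x_def)
  also have "\<dots> \<le> x * ln x - real N - B * ln B + ln x" using Suc by (simp add: x_def)
  also have "\<dots> \<le> (x + 1) * ln (x + 1) - real (Suc N) - B * ln B"
    using k2 by (simp add: algebra_simps)
  finally show ?case by (simp add: x_def add_ac)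
qed

lemma lin_log_contra:
  fixes \<kappa> B C D :: real
  assumes k: "\<kappa> > 0" and B: "B > 0" and D: "D \<ge> 0"
    and h: "\<And>N::nat. \<kappa> * real N \<le> C + D * ln (real N + B)"
  shows False
proof -
  define e where "e = \<kappa> / (2 * (D + 1))"
  have e: "e > 0" using k D by (simp add: e_def)
  have lnb: "ln y \<le> e * y - 1 - ln e" if "y > 0" for y
  proof -
    have "ln (e * y) \<le> e * y - 1" using e that by (intro ln_le_minus_one) simp
    then show ?thesis using e that by (simp add: ln_mult)
  qed
  define C' where "C' = C + D * (e * B - 1 - ln e)"
  have "\<kappa> * real N \<le> C' + (\<kappa> / 2) * real N" for N :: nat
  proof -
    have "D * ln (real N + B) \<le> D * (e * (real N + B) - 1 - ln e)"
      using lnb[of "real N + B"] B D by (intro mult_left_mono) auto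
    also have "\<dots> = D * e * real N + D * (e * B - 1 - ln e)" by (simp add: algebra_simps)
    also have "D * e * real N \<le> (\<kappa> / 2) * real N"
    proof (rule mult_right_mono)
      have "D * e = \<kappa> / 2 * (D / (D + 1))" using D by (simp add: e_def field_simps)
      also have "\<dots> \<le> \<kappa> / 2 * 1" using D k by (intro mult_left_mono) auto
      finally show "D * e \<le> \<kappa> / 2" by simp
    qed simp
    finally show ?thesis using h[of N] unfolding C'_def by linarith
  qed
  then have hh: "(\<kappa> / 2) * real N \<le> C'" for N :: nat
  proof -
    have "\<kappa> * real N \<le> C' + (\<kappa> / 2) * real N" by fact
    then show ?thesis by linarith
  qed
  define N where "N = nat (ceiling (2 * C' / \<kappa>)) + 1"
  have "real N > 2 * C' / \<kappa>" unfolding N_def by linarith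
  then have "(\<kappa> / 2) * real N > C'" using k by (simp add: field_simps)
  with hh[of N] show False by simp
qed



definition Gf :: "(real \<Rightarrow> complex) \<Rightarrow> real \<Rightarrow> real \<Rightarrow> complex \<Rightarrow> complex" where
  "Gf f a b z = Mk f a b 0 z * exp (\<i> * z * of_real ((a + b) / 2))"

lemma G_hol:
  assumes fc: "continuous_on UNIV f"
  shows "Gf f a b holomorphic_on UNIV"
proof -
  have "Mk f a b 0 holomorphic_on UNIV"
    unfolding holomorphic_on_def field_differentiable_def using Mk_deriv[OF fc] by blast
  then show ?thesis unfolding Gf_def[abs_def] by (intro holomorphic_intros)
qed

lemma G_bound:
  assumes fc: "continuous_on UNIV f" and ab: "a \<le> b"
  shows "norm (Gf f a b z) \<le> integral {a..b} (\<lambda>t. norm (f t)) * exp (norm z * ((b - a) / 2))"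
proof -
  define t0 where "t0 = (a + b) / 2"
  define E where "E = exp (\<i> * z * of_real t0)"
  have int: "(\<lambda>t. f t * exp (- \<i> * z * of_real t)) integrable_on {a..b}"
    using fc by (intro cont_integrable continuous_intros)
  have "Gf f a b z = integral {a..b} (\<lambda>t. f t * exp (- \<i> * z * of_real t)) * E"
    unfolding Gf_def Mk_def E_def t0_def by simp
  also have "\<dots> = integral {a..b} (\<lambda>t. f t * exp (- \<i> * z * of_real t) * E)"
    using has_integral_mult_left[OF integrable_integral[OF int], of E] by (simp add: integral_unique)
  finally have G: "Gf f a b z = integral {a..b} (\<lambda>t. f t * exp (- \<i> * z * of_real t) * E)" .
  have "norm (integral {a..b} (\<lambda>t. f t * exp (- \<i> * z * of_real t) * E))
        \<le> integral {a..b} (\<lambda>t. norm (f t) * exp (norm z * ((b - a) / 2)))"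
  proof (rule integral_norm_bound_integral)
    show "(\<lambda>t. f t * exp (- \<i> * z * of_real t) * E) integrable_on {a..b}"
      using fc by (intro cont_integrable continuous_intros)
    show "(\<lambda>t. norm (f t) * exp (norm z * ((b - a) / 2))) integrable_on {a..b}"
      using fc by (intro cont_integrable continuous_intros)
    fix t assume t: "t \<in> {a..b}"
    have re: "Re (- \<i> * z * of_real t) + Re (\<i> * z * of_real t0) = Im z * (t - t0)"
      by (simp add: algebra_simps)
    have "Im z * (t - t0) \<le> \<bar>Im z\<bar> * \<bar>t - t0\<bar>" by (metis abs_ge_self abs_mult)
    also have "\<dots> \<le> norm z * ((b - a) / 2)"
      using t by (intro mult_mono abs_Im_le_cmod) (auto simp: t0_def abs_le_iff field_simps)
    finally have le: "Im z * (t - t0) \<le> norm z * ((b - a) / 2)" .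
    have "norm (f t * exp (- \<i> * z * of_real t) * E) = norm (f t) * exp (Re (- \<i> * z * of_real t) + Re (\<i> * z * of_real t0))"
      unfolding E_def norm_mult norm_exp_eq_Re exp_add by (simp only: mult.assoc)
    also have "\<dots> \<le> norm (f t) * exp (norm z * ((b - a) / 2))"
      unfolding re using le by (intro mult_left_mono) auto
    finally show "norm (f t * exp (- \<i> * z * of_real t) * E) \<le> norm (f t) * exp (norm z * ((b - a) / 2))" .
  qed
  also have "\<dots> = integral {a..b} (\<lambda>t. norm (f t)) * exp (norm z * ((b - a) / 2))"
    using integral_mult[OF cont_integrable[of "\<lambda>t. norm (f t)"], of "exp (norm z * ((b - a) / 2))"] fc
    by (simp add: mult_ac continuous_on_norm)
  finally show ?thesis using G by simp
qed

lemma G_zero: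
  assumes supp: "\<And>t. t \<notin> {a..b} \<Longrightarrow> f t = 0" and sm: "smear f w = 0"
  shows "Gf f a b (of_real w) = 0"
proof -
  have "smear f w = integral UNIV (\<lambda>t. if t \<in> {a..b} then f t * exp (- \<i> * complex_of_real (w * t)) else 0)"
    unfolding smear_def by (rule arg_cong[where f="integral UNIV"]) (auto simp: supp)
  also have "\<dots> = integral {a..b} (\<lambda>t. f t * exp (- \<i> * complex_of_real (w * t)))"
    by (rule integral_restrict_UNIV)
  also have "\<dots> = Mk f a b 0 (of_real w)" unfolding Mk_def by (simp add: mult_ac)
  finally show ?thesis using sm by (simp add: Gf_def)
qed



lemma test_fun_cont:
  assumes "test_fun f" shows "continuous_on UNIV f"
proof -
  obtain D where D: "D 0 = f" "\<And>k t. (D k has_vector_derivative D (Suc k) t) (at t)"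
    using assms unfolding test_fun_def smooth_fun_def by blast
  have "continuous (at t) f" for t using has_vector_derivative_continuous[OF D(2)[of 0 t]] D(1) by simp
  then show ?thesis by (simp add: continuous_at_imp_continuous_on)
qed

lemma prod_lower:
  fixes g :: "real \<Rightarrow> real" and w :: "nat \<Rightarrow> real" and cc :: "nat \<Rightarrow> real"
  assumes inj: "inj w" and wpos: "\<And>n. w n > 0" and fin: "finite Z"
    and le: "\<And>n. n \<in> Z \<Longrightarrow> cc n \<le> g (w n) \<and> cc n \<le> g (- w n) \<and> 0 \<le> cc n"
  shows "(\<Prod>n\<in>Z. cc n)^2 \<le> (\<Prod>x\<in>w ` Z \<union> (\<lambda>n. - w n) ` Z. g x)"
proof -
  have disj: "w ` Z \<inter> (\<lambda>n. - w n) ` Z = {}" using wpos by (auto, metis less_asym neg_less_0_iff_less)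
  have inj2: "inj (\<lambda>n. - w n)" using inj by (simp add: inj_def)
  have "(\<Prod>x\<in>w ` Z \<union> (\<lambda>n. - w n) ` Z. g x) = (\<Prod>x\<in>w ` Z. g x) * (\<Prod>x\<in>(\<lambda>n. - w n) ` Z. g x)"
    using fin disj by (intro prod.union_disjoint) auto
  also have "\<dots> = (\<Prod>n\<in>Z. g (w n)) * (\<Prod>n\<in>Z. g (- w n))"
    using inj inj2 by (simp add: prod.reindex inj_on_subset[OF _ subset_UNIV])
  finally have eq: "(\<Prod>x\<in>w ` Z \<union> (\<lambda>n. - w n) ` Z. g x) = (\<Prod>n\<in>Z. g (w n)) * (\<Prod>n\<in>Z. g (- w n))" .
  have p1: "(\<Prod>n\<in>Z. cc n) \<le> (\<Prod>n\<in>Z. g (w n))" using le by (intro prod_mono) auto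
  have p2: "(\<Prod>n\<in>Z. cc n) \<le> (\<Prod>n\<in>Z. g (- w n))" using le by (intro prod_mono) auto
  have p0: "0 \<le> (\<Prod>n\<in>Z. cc n)" using le by (intro prod_nonneg) auto
  show ?thesis unfolding eq power2_eq_square using p0 p1 p2 by (intro mult_mono) auto
qed

theorem proposition8:
  fixes S c \<mu> sg :: real and m :: nat and f fm :: "real \<Rightarrow> complex"
  assumes "S > 0" and "c > 0" and "\<mu> > 0"
    and "sg = 1 \<or> sg = -1"
    and "test_fun fm" and "test_fun f" and "\<exists>t. f t \<noteq> 0"
    and "phi_m_bdry S c \<mu> sg m fm = phi_bdry S c \<mu> sg f"
  shows "\<not> (\<exists>a b. b - a < 8 / pi * S \<and> (\<forall>t. t \<notin> {a..b} \<longrightarrow> f t = 0))"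
proof
  note S = assms(1) and c = assms(2) and mu = assms(3)
  assume "\<exists>a b. b - a < 8 / pi * S \<and> (\<forall>t. t \<notin> {a..b} \<longrightarrow> f t = 0)"
  then obtain a b0 where ab0: "b0 - a < 8 / pi * S" "\<And>t. t \<notin> {a..b0} \<Longrightarrow> f t = 0" by blast
  obtain t1 where t1: "f t1 \<noteq> 0" using assms(7) by blast
  have t1ab: "t1 \<in> {a..b0}" using ab0(2) t1 by blast
  define b where "b = a + ((b0 - a) + 8 / pi * S) / 2"
  define K where "K = 8 / pi * S"
  have bw: "b - a = ((b0 - a) + K) / 2" by (simp add: b_def K_def)
  have bb0: "b0 < b" using ab0(1) bw unfolding K_def[symmetric] by (simp add: field_simps)
  have ab: "a < b" using t1ab bb0 by simp
  have bwidth: "b - a < 8 / pi * S" using ab0(1) bw unfolding K_def[symmetric] by (simp add: field_simps)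
  have supp: "\<And>t. t \<notin> {a..b} \<Longrightarrow> f t = 0" using ab0(2) bb0 by auto
  have t1ab': "t1 \<in> {a..b}" using t1ab bb0 by auto
  have fc: "continuous_on UNIV f" by (rule test_fun_cont[OF assms(6)])
  obtain z0 where z0: "Mk f a b 0 z0 \<noteq> 0" using Mk_nonzero[OF fc ab t1ab' t1] by blast
  define G where "G = Gf f a b"
  have Gz0: "G z0 \<noteq> 0" using z0 by (simp add: G_def Gf_def)
  have Ghol: "G holomorphic_on UNIV" unfolding G_def by (rule G_hol[OF fc])
  define Y where "Y = integral {a..b} (\<lambda>t. norm (f t))"
  define \<tau> where "\<tau> = (b - a) / 2"
  have \<tau>0: "\<tau> > 0" using ab by (simp add: \<tau>_def)
  have Gb: "norm (G z) \<le> Y * exp (norm z * \<tau>)" for z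
    unfolding G_def Y_def \<tau>_def using G_bound[OF fc] ab by simp
  define \<omega> where "\<omega> = omega S c \<mu>"
  have Gzero: "G (of_real (\<omega> n)) = 0 \<and> G (of_real (- \<omega> n)) = 0" if "n \<noteq> m" for n
    using smear_zeros[OF S c mu assms(4) assms(8) that] G_zero[of a b f, OF supp] unfolding G_def \<omega>_def by blast
  define h where "h = pi / (2 * S)"
  have h0: "h > 0" using S by (simp add: h_def)
  define r0 where "r0 = norm z0"
  define B where "B = (\<mu> + r0) / h"
  have B0: "B > 0" using mu h0 by (simp add: B_def r0_def add_pos_nonneg)
  define k1 where "k1 = h * \<tau>"
  have k1: "k1 < 2"
  proof -
    have "k1 = pi * (b - a) / (4 * S)" using S by (simp add: k1_def h_def \<tau>_def field_simps)
    also have "\<dots> < pi * (8 / pi * S) / (4 * S)" using bwidth S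
      by (intro divide_strict_right_mono mult_strict_left_mono) auto
    also have "\<dots> = 2" using S by (simp add: field_simps)
    finally show ?thesis .
  qed
  have omle: "\<omega> n + r0 \<le> (real n + B) * h" for n
  proof -
    have "\<omega> n + r0 \<le> real n * h + \<mu> + r0" unfolding \<omega>_def h_def using omega_le[OF S c mu] by simp
    also have "\<dots> = (real n + B) * h" using h0 by (simp add: B_def field_simps)
    finally show ?thesis .
  qed
  define C0 where "C0 = ln Y - ln (norm (G z0)) + (B * h + r0) * \<tau> - 2 * ((B + 1) * ln B)"
  have main: "(2 - k1) * real N \<le> C0 + 2 * ((B + 1) * ln (real N + B))" for N :: nat
  proof -
    define \<rho> where "\<rho> = (real N + B) * h"
    have \<rho>0: "\<rho> > 0" using B0 h0 by (simp add: \<rho>_def)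
    define Z where "Z = {n. n < N \<and> n \<noteq> m}"
    have finZ: "finite Z" unfolding Z_def by simp
    define X where "X = \<omega> ` Z \<union> (\<lambda>n. - \<omega> n) ` Z"
    define A where "A = (\<lambda>x. complex_of_real x - z0) ` X"
    have finA: "finite A" unfolding A_def X_def using finZ by simp
    define H where "H = (\<lambda>w. G (w + z0))"
    have Hhol: "H holomorphic_on UNIV"
    proof -
      have "(G \<circ> (\<lambda>w. w + z0)) holomorphic_on UNIV"
        by (rule holomorphic_on_compose) (auto intro: holomorphic_intros holomorphic_on_subset[OF Ghol])
      then show ?thesis by (simp add: H_def o_def)
    qed
    have Y0: "Y \<ge> 0" unfolding Y_def using fc
      by (intro integral_nonneg cont_integrable continuous_intros) auto
    have Hbd: "norm (H w) \<le> Y * exp ((\<rho> + r0) * \<tau>)" if "norm w = \<rho>" for w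
    proof -
      have "norm (H w) \<le> Y * exp (norm (w + z0) * \<tau>)" unfolding H_def by (rule Gb)
      also have "\<dots> \<le> Y * exp ((\<rho> + r0) * \<tau>)"
        using norm_triangle_ineq[of w z0] that \<tau>0 Y0 unfolding r0_def
        by (intro mult_left_mono) (auto intro!: mult_right_mono)
      finally show ?thesis .
    qed
    have H0: "H 0 \<noteq> 0" using Gz0 by (simp add: H_def)
    have xbd: "norm (complex_of_real x - z0) \<le> (real n + B) * h \<and> G (of_real x) = 0"
      if "n \<in> Z" "x = \<omega> n \<or> x = - \<omega> n" for n x
    proof -
      have "norm (complex_of_real x - z0) \<le> \<bar>x\<bar> + r0" unfolding r0_def
        using norm_triangle_ineq4[of "complex_of_real x" z0] by simp
      also have "\<bar>x\<bar> = \<omega> n" using that(2) omega_pos[OF mu, of S c] unfolding \<omega>_def by (auto simp: less_imp_le)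
      finally have "norm (complex_of_real x - z0) \<le> \<omega> n + r0" .
      also have "\<omega> n + r0 \<le> (real n + B) * h" by (rule omle)
      finally show ?thesis using Gzero[of n] that by (auto simp: Z_def)
    qed
    have HA: "H a' = 0 \<and> norm a' < \<rho>" if a'A: "a' \<in> A" for a'
    proof -
      obtain x n where x: "a' = complex_of_real x - z0" "n \<in> Z" "x = \<omega> n \<or> x = - \<omega> n"
        using a'A unfolding A_def X_def by blast
      have "real n + B < real N + B" using x(2) by (simp add: Z_def)
      then have "(real n + B) * h < \<rho>" using h0 by (simp add: \<rho>_def)
      then show ?thesis using xbd[OF x(2,3)] x(1) by (simp add: H_def)
    qed
    have J: "norm (H 0) * (\<Prod>a'\<in>A. \<rho> / norm a') \<le> Y * exp ((\<rho> + r0) * \<tau>)"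
      by (rule jensen_ineq[OF finA Hhol \<rho>0 Hbd H0 HA])
    define cc where "cc = (\<lambda>n::nat. (real N + B) / (real n + B))"
    define P where "P = (\<Prod>n\<in>Z. cc n)"
    have injA: "inj_on (\<lambda>x. complex_of_real x - z0) X" by (auto simp: inj_on_def)
    have "(\<Prod>a'\<in>A. \<rho> / norm a') = (\<Prod>x\<in>X. \<rho> / norm (complex_of_real x - z0))"
      unfolding A_def by (simp add: prod.reindex[OF injA])
    moreover have "P^2 \<le> (\<Prod>x\<in>X. \<rho> / norm (complex_of_real x - z0))"
      unfolding P_def X_def
    proof (rule prod_lower[OF _ _ finZ])
      show "inj \<omega>" unfolding \<omega>_def by (rule omega_inj[OF S c mu])
      show "\<And>n. \<omega> n > 0" unfolding \<omega>_def by (rule omega_pos[OF mu])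
      fix n assume n: "n \<in> Z"
      have one: "cc n \<le> \<rho> / norm (complex_of_real x - z0)" if "x = \<omega> n \<or> x = - \<omega> n" for x
      proof -
        have nb: "norm (complex_of_real x - z0) \<le> (real n + B) * h" using xbd[OF n that] by simp
        have "complex_of_real x \<noteq> z0" using xbd[OF n that] Gz0 by auto
        then have np: "norm (complex_of_real x - z0) > 0" by simp
        have "cc n = \<rho> / ((real n + B) * h)" using h0 B0 by (simp add: cc_def \<rho>_def)
        also have "\<dots> \<le> \<rho> / norm (complex_of_real x - z0)"
          using nb np \<rho>0 h0 B0 by (intro divide_left_mono) auto
        finally show ?thesis .
      qed
      show "cc n \<le> \<rho> / norm (complex_of_real (\<omega> n) - z0) \<and> cc n \<le> \<rho> / norm (complex_of_real (- \<omega> n) - z0) \<and> 0 \<le> cc n"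
        using one[of "\<omega> n"] one[of "- \<omega> n"] B0 by (simp add: cc_def)
    qed
    ultimately have "norm (G z0) * P^2 \<le> Y * exp ((\<rho> + r0) * \<tau>)"
      using J H0 by (simp add: H_def) (smt (verit) mult_left_mono norm_ge_zero)

    have ccpos: "cc n > 0" for n using B0 by (simp add: cc_def)
    have Ppos: "P > 0" unfolding P_def using ccpos by (intro prod_pos) auto
    have Gp: "norm (G z0) > 0" using Gz0 by simp
    have lhs: "0 < norm (G z0) * P^2" using Ppos Gp by simp
    have Ypos: "Y > 0"
    proof (rule ccontr)
      assume "\<not> Y > 0"
      then have "Y * exp ((\<rho> + r0) * \<tau>) \<le> 0" by (simp add: mult_nonpos_nonneg)
      with lhs \<open>norm (G z0) * P^2 \<le> Y * exp ((\<rho> + r0) * \<tau>)\<close> show False by simp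
    qed
    have "ln (norm (G z0) * P^2) \<le> ln (Y * exp ((\<rho> + r0) * \<tau>))"
      using lhs \<open>norm (G z0) * P^2 \<le> Y * exp ((\<rho> + r0) * \<tau>)\<close> by (subst ln_le_cancel_iff) auto
    then have L1: "ln (norm (G z0)) + 2 * ln P \<le> ln Y + (\<rho> + r0) * \<tau>"
      using Gp Ppos Ypos by (simp add: ln_mult ln_realpow)
    have lnP: "ln P = (\<Sum>n\<in>Z. ln (cc n))" unfolding P_def using ccpos finZ
      by (intro ln_prod) (auto simp: less_imp_neq[symmetric])
    define l where "l = ln (real N + B)"
    have lcc: "ln (cc n) = l - ln (real n + B)" for n
      using B0 by (simp add: cc_def l_def ln_div add_pos_nonneg)
    have sumN: "(\<Sum>n<N. ln (cc n)) \<ge> real N - B * l + B * ln B"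
    proof -
      have "(\<Sum>n<N. ln (cc n)) = real N * l - (\<Sum>n<N. ln (real n + B))"
        by (simp add: lcc sum_subtractf)
      then show ?thesis using stir[OF B0, of N] unfolding l_def[symmetric] by (simp add: algebra_simps)
    qed
    have lB: "ln B \<le> l" unfolding l_def using B0 by (subst ln_le_cancel_iff) auto
    have sumZ: "(\<Sum>n<N. ln (cc n)) \<le> (\<Sum>n\<in>Z. ln (cc n)) + (l - ln B)"
    proof (cases "m < N")
      case True
      have eqs: "{..<N} = insert m Z" "m \<notin> Z" using True by (auto simp: Z_def)
      have "ln (real m + B) \<ge> ln B" using B0 by (subst ln_le_cancel_iff) auto
      then have "ln (cc m) \<le> l - ln B" using lcc[of m] by simp
      then show ?thesis unfolding eqs(1) using finZ eqs(2) by simp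
    next
      case False
      then have "{..<N} = Z" by (auto simp: Z_def)
      then show ?thesis using lB by simp
    qed
    have e1: "(\<rho> + r0) * \<tau> = k1 * real N + (B * h + r0) * \<tau>"
      by (simp add: \<rho>_def k1_def algebra_simps)
    have e2: "(2 - k1) * real N = 2 * real N - k1 * real N" by (simp add: algebra_simps)
    have e3: "B * l + l = (B + 1) * l" "B * ln B + ln B = (B + 1) * ln B" by (simp_all add: algebra_simps)
    show ?thesis unfolding e2 C0_def l_def[symmetric] using L1 lnP sumN sumZ e1 e3 by linarith
  qed
  show False
  proof (rule lin_log_contra[of "2 - k1" B "2 * (B + 1)" C0])
    show "0 < 2 - k1" using k1 by simp
    show "0 < B" by (rule B0)
    show "0 \<le> 2 * (B + 1)" using B0 by simp
    fix N :: nat show "(2 - k1) * real N \<le> C0 + 2 * (B + 1) * ln (real N + B)"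
      using main[of N] by (simp only: mult.assoc)
  qed
qed


end
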